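(* Let $X_n(d_1,\dots,d_r)\subset\mathbb{C}P^{n+r}$ be a complete intersection with $r>1$, $d_1,\dots,d_r>1$ and $c_1=n+r+1-\sum_{i=1}^r d_i<0$. For $1\leqslant j\leqslant r$ set $c_1^{(n,\hat j)}=n+(r-1)+1-\sum_{i=1}^r d_i+d_j$. If $c_1^{(n,\hat j)}\geqslant 0$ for every $1\leqslant j\leqslant r$, then $(-1)^n{\rm Td}(X_n(d_1,\dots,d_r))\geqslant n+r$.
   Context: A complete intersection $X_n(d_1,\dots,d_r)\subset\mathbb{C}P^{n+r}$ is a compact complex $n$-dimensional manifold given as the transversal intersection of $r$ nonsingular hypersurfaces of degrees $d_1,\dots,d_r$. The Todd genus of a compact complex $n$-manifold $M$ with formal Chern roots $x_1,\dots,x_n$ is ${\rm Td}(M)=\big(\prod_i\frac{x_i}{1-e^{-x_i}}\big)[M]$. *)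

theory Defs
  imports "HOL-Computational_Algebra.Formal_Power_Series"
begin

text \<open>Formal power series in the hyperplane class x of CP^{n+r}.
  ehat d = (1 - e^{-d x})/(d x) = sum_k (-d)^k x^k/(k+1)!.
  The Todd power series is x/(1 - e^{-x}) = inverse (ehat 1).\<close>

definition ehat :: "real \<Rightarrow> real fps" where
  "ehat d = Abs_fps (\<lambda>k. (- d) ^ k / fact (k + 1))"

definition todd_series :: "real fps" where
  "todd_series = inverse (ehat 1)"

text \<open>Todd genus of the complete intersection X_n(d_1,...,d_r) in CP^{n+r}.
  Its tangent bundle satisfies T X + (O(d_1) + ... + O(d_r))|_X = (n+r+1) O(1)|_X,
  so by multiplicativity the Todd class is
  (x/(1-e^{-x}))^{n+r+1} * prod_i (1-e^{-d_i x})/(d_i x) ... written as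
  todd_series^(n+r+1) * prod_i (d_i x/(1-e^{-d_i x}))^{-1},
  and evaluating on the fundamental class [X] = (d_1 ... d_r) x^n \<inter> [CP^{n+r}]
  picks the coefficient of x^n times the degree d_1 ... d_r.\<close>

definition todd_ci :: "nat \<Rightarrow> nat list \<Rightarrow> real" where
  "todd_ci n ds =
     (\<Prod>d\<leftarrow>ds. real d) *
     fps_nth (todd_series ^ (n + length ds + 1) * (\<Prod>d\<leftarrow>ds. ehat (real d))) n"

end

theory Submission
  imports Defs
begin

definition EE :: "real fps" where "EE = 1 - fps_exp (-1)"

lemma ehat_X: "fps_const (real d) * fps_X * ehat (real d) = 1 - fps_exp (- real d)"
proof (rule fps_ext)
  fix k show "fps_nth (fps_const (real d) * fps_X * ehat (real d)) k = fps_nth (1 - fps_exp (- real d)) k"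
  proof (cases k)
    case 0 then show ?thesis by (simp add: ehat_def)
  next
    case (Suc j) then show ?thesis
      by (simp add: ehat_def fps_exp_def mult.assoc field_simps)
  qed
qed

lemma ehat_E: "fps_const (real d) * fps_X * ehat (real d) = 1 - (1 - EE) ^ d"
  by (simp add: ehat_X EE_def fps_exp_power_mult)

lemma E_def2: "EE = fps_X * ehat 1"
  using ehat_X[of 1] by (simp add: EE_def)

lemma ehat0: "fps_nth (ehat 1) 0 = 1" by (simp add: ehat_def)

lemma TE: "todd_series * EE = fps_X"
proof -
  have "todd_series * EE = fps_X * (inverse (ehat 1) * ehat 1)"
    by (simp add: E_def2 todd_series_def algebra_simps)
  also have "inverse (ehat 1) * ehat 1 = 1" by (rule inverse_mult_eq_1) (simp add: ehat0)
  finally show ?thesis by simp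
qed

lemma T0: "fps_nth todd_series 0 = 1" by (simp add: todd_series_def ehat0)

lemma E1: "fps_nth EE 1 = 1" by (simp add: EE_def fps_exp_def)

lemma Enz: "EE \<noteq> 0" using E1 by auto

lemma dE: "fps_deriv EE = 1 - EE" proof -
  have "fps_const (-1::real) = - 1" by (metis fps_const_neg fps_const_1_eq_1)
  then show ?thesis by (simp add: EE_def)
qed

lemma TE': "EE * todd_series = fps_X" using TE by (simp add: mult.commute)

lemma ODE: "fps_X * fps_deriv todd_series = todd_series - todd_series^2 + fps_X * todd_series"
proof -
  let ?T = todd_series
  have d: "fps_deriv ?T * EE + ?T * (1 - EE) = 1"
    using arg_cong[OF TE, of fps_deriv] by (simp add: dE algebra_simps)
  have "EE * (fps_X * fps_deriv ?T - (?T - ?T^2 + fps_X * ?T)) = 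
     fps_X * (fps_deriv ?T * EE + ?T * (1 - EE)) - fps_X * ?T * (1 - EE) - (?T * EE) + ?T * (?T * EE) - fps_X * (?T * EE)"
    by (simp add: algebra_simps power2_eq_square)
  also have "\<dots> = 0" unfolding d TE by (simp add: algebra_simps TE TE')
  finally show ?thesis using Enz by simp
qed

lemma deriv_coeff: "fps_nth (fps_X * fps_deriv G - of_nat k * G) k = (0::real)"
  by (cases k) (simp_all add: fps_of_nat[symmetric])

lemma key: "m \<ge> 1 \<Longrightarrow> fps_nth (todd_series ^ m) (m - 1) = 1"
proof (induction m rule: dec_induct)
  case base then show ?case by (simp add: T0)
next
  case (step m)
  let ?T = todd_series
  have "fps_X * fps_deriv (?T ^ m) - of_nat m * ?T ^ m
      = of_nat m * (?T ^ (m - 1) * (fps_X * fps_deriv ?T - ?T))"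
  proof -
    obtain j where j: "m = Suc j" using step(1) by (cases m) auto
    have dd: "fps_deriv (?T ^ Suc j) = of_nat (Suc j) * fps_deriv ?T * ?T ^ j"
      by (simp only: fps_deriv_power' diff_Suc_1)
    show ?thesis unfolding j dd by (simp add: algebra_simps)
  qed
  also have "\<dots> = of_nat m * (fps_X * ?T ^ m - ?T ^ (m + 1))"
    using step(1) unfolding ODE by (cases m) (simp_all add: algebra_simps power2_eq_square)
  finally have "fps_nth (of_nat m * (fps_X * ?T ^ m - ?T ^ (m + 1))) m = 0"
    using deriv_coeff[of "?T ^ m" m] by metis
  then have "real m * (fps_nth (?T ^ m) (m - 1) - fps_nth (?T ^ (m+1)) m) = 0"
  proof -
    have "fps_nth (of_nat m * (fps_X * ?T ^ m - ?T ^ (m + 1))) m = real m * fps_nth (fps_X * ?T ^ m - ?T ^ (m + 1)) m"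
      by (simp only: fps_of_nat[symmetric] fps_mult_left_const_nth)
    also have "\<dots> = real m * (fps_nth (?T ^ m) (m - 1) - fps_nth (?T ^ (m+1)) m)"
    proof -
      have "fps_nth (fps_X * ?T ^ m) m = fps_nth (?T ^ m) (m - 1)" using step(1) by simp
      then show ?thesis by (simp only: fps_sub_nth)
    qed
    finally show ?thesis using \<open>fps_nth (of_nat m * (fps_X * ?T ^ m - ?T ^ (m + 1))) m = 0\<close> by linarith
  qed
  then show ?case using step by simp
qed

lemma LamE:
  "fps_nth (todd_series ^ (N + 1) * EE ^ k) N = (if k \<le> N then 1 else 0)"
proof (cases "k \<le> N")
  case True
  let ?T = todd_series
  have e1: "?T ^ (N + 1 - k) * ?T ^ k = ?T ^ (N + 1)"
    using True by (simp flip: power_add)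
  have "?T ^ (N + 1 - k) * (?T * EE) ^ k = ?T ^ (N + 1 - k) * ?T ^ k * EE ^ k"
    by (simp add: power_mult_distrib mult.assoc)
  then have "?T ^ (N + 1) * EE ^ k = fps_X ^ k * ?T ^ (N + 1 - k)"
    unfolding e1 TE by (simp add: mult.commute)
  moreover have "fps_nth (fps_X ^ k * ?T ^ (N + 1 - k)) N = fps_nth (?T ^ (N + 1 - k)) (N + 1 - k - 1)"
    using True by (subst fps_X_power_mult_nth) simp
  moreover have "fps_nth (?T ^ (N + 1 - k)) (N + 1 - k - 1) = 1"
    using True by (intro key) simp
  ultimately show ?thesis using True by simp
next
  case False
  have kk: "N + 1 + (k - (N + 1)) = k" using False by simp
  have e1: "EE ^ (N + 1) * EE ^ (k - (N + 1)) = EE ^ k"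
    by (metis power_add kk)
  have "todd_series ^ (N + 1) * (EE ^ (N + 1) * EE ^ (k - (N + 1))) = fps_X ^ (N + 1) * EE ^ (k - (N + 1))"
    by (simp only: mult.assoc[symmetric] power_mult_distrib[symmetric] TE)
  then have "todd_series ^ (N + 1) * EE ^ k = fps_X ^ (N + 1) * EE ^ (k - (N + 1))"
    unfolding e1 .
  moreover have "fps_nth (fps_X ^ (N + 1) * EE ^ (k - (N + 1))) N = 0"
    by (subst fps_X_power_mult_nth) simp
  ultimately show ?thesis using False by simp
qed

lemma const_neg_pow: "fps_const (c::real) * (-1) ^ k = fps_const (c * (-1) ^ k)"
  by (induct k arbitrary: c) (simp_all add: algebra_simps)

lemma alt_sum: "(\<Sum>k\<le>N. (-1) ^ k * real (Suc p choose k)) = (-1) ^ N * real (p choose N)"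
proof (induction N)
  case 0 then show ?case by simp
next
  case (Suc N)
  then show ?case by (simp add: algebra_simps)
qed

lemma LamPow:
  "fps_nth (todd_series ^ (N + 1) * (1 - EE) ^ Suc p) N = (-1) ^ N * real (p choose N)"
proof -
  let ?T = todd_series
  have "(1 - EE) ^ Suc p = (\<Sum>k\<le>Suc p. of_nat (Suc p choose k) * (- EE) ^ k * 1 ^ (Suc p - k))"
  proof -
    have "(1 - EE) ^ Suc p = (- EE + 1) ^ Suc p" by (simp only: diff_conv_add_uminus add.commute)
    then show ?thesis by (simp only: binomial_ring)
  qed
  also have "\<dots> = (\<Sum>k\<le>Suc p. fps_const (real (Suc p choose k) * (-1) ^ k) * EE ^ k)"
  proof (rule sum.cong[OF refl])
    fix k
    have "fps_const (real (Suc p choose k) * (-1) ^ k) = of_nat (Suc p choose k) * (-1) ^ k"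
      by (simp add: const_neg_pow[symmetric] fps_of_nat)
    moreover have "(- EE) ^ k = (-1) ^ k * EE ^ k" by (rule power_minus)
    ultimately show "of_nat (Suc p choose k) * (- EE) ^ k * 1 ^ (Suc p - k) = fps_const (real (Suc p choose k) * (-1) ^ k) * EE ^ k"
      by (simp only: power_one mult_1_right mult.assoc)
  qed
  finally have "fps_nth (?T ^ (N + 1) * (1 - EE) ^ Suc p) N
     = (\<Sum>k\<le>Suc p. fps_nth (?T ^ (N + 1) * (fps_const (real (Suc p choose k) * (-1) ^ k) * EE ^ k)) N)"
    by (simp only: sum_distrib_left fps_sum_nth)
  also have "\<dots> = (\<Sum>k\<le>Suc p. (-1) ^ k * real (Suc p choose k) * (if k \<le> N then 1 else 0))"
  proof (rule sum.cong[OF refl])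
    fix k
    have "?T ^ (N + 1) * (fps_const (real (Suc p choose k) * (-1) ^ k) * EE ^ k) =
       fps_const (real (Suc p choose k) * (-1) ^ k) * (?T ^ (N + 1) * EE ^ k)" by (simp only: mult_ac)
    then show "fps_nth (?T ^ (N + 1) * (fps_const (real (Suc p choose k) * (-1) ^ k) * EE ^ k)) N =
      (-1) ^ k * real (Suc p choose k) * (if k \<le> N then 1 else 0)"
      by (simp only: fps_mult_left_const_nth LamE) simp
  qed
  also have "\<dots> = (\<Sum>k\<in>{..Suc p} \<inter> {..N}. (-1) ^ k * real (Suc p choose k))"
    by (subst sum.inter_restrict) (auto intro!: sum.cong)
  also have "\<dots> = (\<Sum>k\<le>N. (-1) ^ k * real (Suc p choose k))"
    by (rule sum.mono_neutral_left) auto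
  also have "\<dots> = (-1) ^ N * real (p choose N)" by (rule alt_sum)
  finally show ?thesis .
qed


lemma prod_ehat:
  "fps_X ^ length ds * fps_const (\<Prod>d\<leftarrow>ds. real d) * (\<Prod>d\<leftarrow>ds. ehat (real d))
     = (\<Prod>d\<leftarrow>ds. 1 - (1 - EE) ^ d)"
proof (induction ds)
  case Nil then show ?case by simp
next
  case (Cons a ds)
  have "fps_X ^ length (a # ds) * fps_const (\<Prod>d\<leftarrow>a # ds. real d) * (\<Prod>d\<leftarrow>a # ds. ehat (real d))
     = (fps_const (real a) * fps_X * ehat (real a)) *
       (fps_X ^ length ds * fps_const (\<Prod>d\<leftarrow>ds. real d) * (\<Prod>d\<leftarrow>ds. ehat (real d)))"
    by (simp only: list.simps prod_list.Cons length_Cons power_Suc fps_const_mult[symmetric] mult_ac)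
  also have "\<dots> = (\<Prod>d\<leftarrow>a # ds. 1 - (1 - EE) ^ d)"
    unfolding Cons.IH ehat_E by simp
  finally show ?case .
qed

lemma todd_as:
  "todd_ci n ds = fps_nth (todd_series ^ (n + length ds + 1) * (\<Prod>d\<leftarrow>ds. 1 - (1 - EE) ^ d)) (n + length ds)"
proof -
  let ?r = "length ds" and ?P = "(\<Prod>d\<leftarrow>ds. real d)" and ?Q = "(\<Prod>d\<leftarrow>ds. ehat (real d))"
  and ?G = "todd_series ^ (n + length ds + 1)"
  have "todd_ci n ds = fps_nth (fps_const ?P * (?G * ?Q)) n"
    unfolding todd_ci_def by (simp only: fps_mult_left_const_nth)
  also have "\<dots> = fps_nth (fps_X ^ ?r * (fps_const ?P * (?G * ?Q))) (n + ?r)"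
    by (subst fps_X_power_mult_nth) simp
  also have "fps_X ^ ?r * (fps_const ?P * (?G * ?Q)) = ?G * (fps_X ^ ?r * fps_const ?P * ?Q)"
    by (simp add: algebra_simps)
  finally show ?thesis unfolding prod_ehat .
qed

lemma prod_neg: "finite S \<Longrightarrow> (\<Prod>i\<in>S. - (x i :: real fps)) = (-1) ^ card S * (\<Prod>i\<in>S. x i)"
proof -
  have "(\<Prod>i\<in>S. - x i) = (\<Prod>i\<in>S. (-1) * x i)" by simp
  also have "\<dots> = (-1) ^ card S * (\<Prod>i\<in>S. x i)" by (simp only: prod.distrib prod_constant)
  finally show ?thesis .
qed

lemma prod_expand:
  "(\<Prod>d\<leftarrow>ds. 1 - (1 - EE) ^ d) =
   (\<Sum>S\<in>Pow {0..<length ds}. (-1) ^ card S * (1 - EE) ^ (\<Sum>i\<in>S. ds ! i))"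
proof -
  have "(\<Prod>d\<leftarrow>ds. 1 - (1 - EE) ^ d) = (\<Prod>i\<in>{0..<length ds}. - ((1 - EE) ^ (ds ! i)) + 1)"
    by (simp add: prod.list_conv_set_nth)
  also have "\<dots> = (\<Sum>S\<in>Pow {0..<length ds}. (\<Prod>i\<in>S. - ((1 - EE) ^ (ds ! i))) * (\<Prod>i\<in>{0..<length ds} - S. 1))"
    by (rule prod_add) simp
  also have "\<dots> = (\<Sum>S\<in>Pow {0..<length ds}. (-1) ^ card S * (1 - EE) ^ (\<Sum>i\<in>S. ds ! i))"
  proof (rule sum.cong[OF refl])
    fix S assume "S \<in> Pow {0..<length ds}"
    then have "finite S" by (auto intro: finite_subset)
    then show "(\<Prod>i\<in>S. - ((1 - EE) ^ (ds ! i))) * (\<Prod>i\<in>{0..<length ds} - S. 1) = (-1) ^ card S * (1 - EE) ^ (\<Sum>i\<in>S. ds ! i)"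
      by (simp add: prod_neg power_sum)
  qed
  finally show ?thesis .
qed


theorem lemma3p3:
  fixes n :: nat and ds :: "nat list"
  assumes "length ds > 1"
    and "\<forall>d\<in>set ds. d > 1"
    and "int n + int (length ds) + 1 - int (sum_list ds) < 0"
    and "\<forall>j<length ds. int n + (int (length ds) - 1) + 1 - int (sum_list ds) + int (ds ! j) \<ge> 0"
  shows "(-1) ^ n * todd_ci n ds \<ge> real (n + length ds)"
proof -
  define r where "r = length ds"
  define N where "N = n + r"
  define I where "I = {0..<r}"
  define D where "D = sum_list ds"
  define dS where "dS S = (\<Sum>i\<in>S. ds ! i)" for S
  define h where "h S = (-1) ^ card S * fps_nth (todd_series ^ (N + 1) * (1 - EE) ^ dS S) N" for S
  have finI: "finite I" by (simp add: I_def)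
  have DI: "dS I = D" by (simp add: D_def I_def r_def dS_def sum_list_sum_nth)
  have Dge: "D \<ge> N + 2" using assms(3) by (simp add: D_def N_def r_def)
  have cj: "D \<le> N + ds ! j" if "j \<in> I" for j
    using assms(4) that by (force simp: D_def N_def r_def I_def)
  have pos: "ds ! i > 1" if "i \<in> I" for i
    using assms(2) that by (simp add: I_def r_def)
  have rpos: "r > 0" using assms(1) by (simp add: r_def del: length_greater_0_conv)
  have "todd_ci n ds = fps_nth (todd_series ^ (N + 1) *
      (\<Sum>S\<in>Pow I. (-1) ^ card S * (1 - EE) ^ dS S)) N"
    unfolding todd_as prod_expand by (simp add: N_def r_def I_def dS_def)
  also have "\<dots> = (\<Sum>S\<in>Pow I. h S)"
  proof -
    have "todd_series ^ (N + 1) * ((-1) ^ card S * (1 - EE) ^ dS S)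
      = fps_const ((-1) ^ card S) * (todd_series ^ (N + 1) * (1 - EE) ^ dS S)" for S
    proof -
      have "fps_const ((-1::real) ^ card S) = (-1) ^ card S"
        using const_neg_pow[of 1 "card S"] by simp
      then show ?thesis by (simp only: mult_ac)
    qed
    then show ?thesis
      by (simp only: sum_distrib_left fps_sum_nth fps_mult_left_const_nth h_def)
  qed
  also have "\<dots> = (\<Sum>S\<in>{{}, I}. h S)"
  proof (rule sum.mono_neutral_right)
    show "finite (Pow I)" using finI by simp
    show "{{}, I} \<subseteq> Pow I" by auto
    show "\<forall>S\<in>Pow I - {{}, I}. h S = 0"
    proof
      fix S assume S: "S \<in> Pow I - {{}, I}"
      then have SI: "S \<subseteq> I" and Sne: "S \<noteq> {}" and SnI: "S \<noteq> I" by auto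
      have finS: "finite S" using SI finI by (rule finite_subset)
      obtain i where i: "i \<in> S" using Sne by auto
      have "ds ! i \<le> dS S" unfolding dS_def by (rule member_le_sum[OF i _ finS]) simp
      then have lo: "dS S \<ge> 1" using pos[of i] i SI by auto
      obtain j where j: "j \<in> I" "j \<notin> S" using SI SnI by auto
      have "dS S + ds ! j = dS (insert j S)" using j finS by (simp add: dS_def)
      also have "\<dots> \<le> dS I" unfolding dS_def
        by (rule sum_mono2[OF finI]) (use SI j in auto)
      finally have "dS S \<le> N" using cj[OF j(1)] DI by simp
      then obtain p where p: "dS S = Suc p" "p < N" using lo by (cases "dS S") auto
      show "h S = 0" unfolding h_def p(1) LamPow using p(2) by simp
    qed
  qed
  also have "\<dots> = h {} + h I"
    using rpos by (simp add: I_def)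
  also have "h {} = 1"
    using LamE[of N 0] by (simp add: h_def dS_def)
  also have "h I = (-1) ^ r * ((-1) ^ N * real ((D - 1) choose N))"
  proof -
    have "dS I = Suc (D - 1)" using DI Dge by simp
    then show ?thesis unfolding h_def by (simp only: LamPow) (simp add: I_def)
  qed
  finally have td: "todd_ci n ds = 1 + (-1) ^ r * ((-1) ^ N * real ((D - 1) choose N))" .
  have sgn: "(-1::real) ^ n * ((-1) ^ r * (-1) ^ N) = 1"
  proof -
    have "n + (r + N) = 2 * (n + r)" by (simp add: N_def)
    then show ?thesis by (simp only: power_add[symmetric]) (simp add: power_mult)
  qed
  have C: "real (N + 1) \<le> real ((D - 1) choose N)"
  proof -
    have "Suc N choose N \<le> (D - 1) choose N" by (rule binomial_right_mono) (use Dge in simp)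
    then show ?thesis by (simp add: binomial_Suc_n)
  qed
  have m1: "(-1::real) ^ n \<ge> -1" by (cases "even n") auto
  have "(-1) ^ n * todd_ci n ds = (-1) ^ n + ((-1::real) ^ n * ((-1) ^ r * (-1) ^ N)) * real ((D - 1) choose N)"
    unfolding td by (simp add: algebra_simps)
  also have "\<dots> = (-1) ^ n + real ((D - 1) choose N)" unfolding sgn by simp
  finally show ?thesis using C m1 by (simp add: N_def r_def)
qed

end
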